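(* Let $p\notin\{2,3,11\}$ be a prime, $\ell\in\{0,\dots,N-1\}$, and let $b\in\mathbb Q\cap\mathbb Z_p$ satisfy $f_\ell(b)=0$. Then $\ell+Nb$ is a twisted rational zero of $T$.
   Context: $\Lambda$ is the set of roots of $P(X)=X^3-X^2-X-1$, $c_\lambda=\lambda P'(\lambda)^{-1}$; $T(n)=\sum_\lambda c_\lambda\lambda^n$ is the Tribonacci sequence. Fix an embedding of $\overline{\mathbb Q}$ into an algebraic closure of $\mathbb Q_p$. $\mathbb K=\mathbb Q_p(\Lambda)$, $\mathcal O$ its ring of integers, $N=N_p$ the order of the subgroup of $(\mathcal O/p\mathcal O)^\times$ generated by the images of $\Lambda$, and $f_\ell(z)=\sum_{\lambda\in\Lambda}c_\lambda\lambda^\ell\exp(z\log(\lambda^N))$ for $z\in\mathbb Z_p$ (p-adic exp and log). For $r=s/m\in\mathbb Q$ ($m>0$), a determination of $\lambda^r$ is any algebraic number $\mu$ with $\mu^m=\lambda^s$. A rational number $r$ is a twisted rational zero of $T$ if there exist determinations $\mu_i$ of $\lambda_i^r$ ($i=1,2,3$) and roots of unity $\xi_1,\xi_2,\xi_3$ with $\sum_{i=1}^3\xi_ic_{\lambda_i}\mu_i=0$. *)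

theory Defs
  imports "HOL-Computational_Algebra.Computational_Algebra"
begin

definition padic_val_rat :: "nat \<Rightarrow> rat \<Rightarrow> int" where
  "padic_val_rat p r = (case quotient_of r of (a, b) \<Rightarrow>
      int (multiplicity (int p) a) - int (multiplicity (int p) b))"

definition padic_abs_rat :: "nat \<Rightarrow> rat \<Rightarrow> real" where
  "padic_abs_rat p r = (if r = 0 then 0 else real p powr (- real_of_int (padic_val_rat p r)))"

text \<open>A field F (containing Q) with an absolute value nabs extending |.|_p, non-archimedean,
  complete and algebraically closed (a model of C_p, into which Qbar is embedded).\<close>
definition Cp_like :: "nat \<Rightarrow> ('a::field_char_0 \<Rightarrow> real) \<Rightarrow> bool" where
  "Cp_like p nabs \<longleftrightarrow>
     (\<forall>x. 0 \<le> nabs x) \<and> (\<forall>x. nabs x = 0 \<longleftrightarrow> x = 0) \<and>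
     (\<forall>x y. nabs (x * y) = nabs x * nabs y) \<and>
     (\<forall>x y. nabs (x + y) \<le> max (nabs x) (nabs y)) \<and>
     (\<forall>r. nabs (of_rat r) = padic_abs_rat p r) \<and>
     (\<forall>X::nat \<Rightarrow> 'a. (\<forall>e>0. \<exists>M. \<forall>m\<ge>M. \<forall>n\<ge>M. nabs (X m - X n) < e) \<longrightarrow>
          (\<exists>L. \<forall>e>0. \<exists>M. \<forall>n\<ge>M. nabs (X n - L) < e)) \<and>
     (\<forall>q::'a poly. 0 < degree q \<longrightarrow> (\<exists>x. poly q x = 0))"

definition nsums :: "('a::field \<Rightarrow> real) \<Rightarrow> (nat \<Rightarrow> 'a) \<Rightarrow> 'a \<Rightarrow> bool" where
  "nsums nabs f s \<longleftrightarrow> (\<forall>e>0. \<exists>M. \<forall>n\<ge>M. nabs ((\<Sum>k<n. f k) - s) < e)"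

definition plog :: "('a::field_char_0 \<Rightarrow> real) \<Rightarrow> 'a \<Rightarrow> 'a" where
  "plog nabs x = (THE s. nsums nabs (\<lambda>n. (-1) ^ n * (x - 1) ^ (n + 1) / of_nat (n + 1)) s)"

definition pexp :: "('a::field_char_0 \<Rightarrow> real) \<Rightarrow> 'a \<Rightarrow> 'a" where
  "pexp nabs z = (THE s. nsums nabs (\<lambda>n. z ^ n / fact n) s)"

definition tribP :: "'a::field \<Rightarrow> 'a" where
  "tribP x = x ^ 3 - x ^ 2 - x - 1"

definition tribP' :: "'a::field \<Rightarrow> 'a" where
  "tribP' x = 3 * x ^ 2 - 2 * x - 1"

definition Lam :: "'a::field set" where
  "Lam = {x. tribP x = 0}"

definition cc :: "'a::field \<Rightarrow> 'a" where
  "cc x = x / tribP' x"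

text \<open>N = order of the subgroup of (O/pO)^* generated by the images of Lambda:
  least n > 0 with lambda^n = 1 mod pO for all roots, i.e. |lambda^n - 1| <= |p|.\<close>
definition tribN :: "nat \<Rightarrow> ('a::field_char_0 \<Rightarrow> real) \<Rightarrow> nat" where
  "tribN p nabs = (LEAST n. 0 < n \<and> (\<forall>x\<in>(Lam::'a set). nabs (x ^ n - 1) \<le> 1 / real p))"

definition f_ell :: "nat \<Rightarrow> ('a::field_char_0 \<Rightarrow> real) \<Rightarrow> nat \<Rightarrow> 'a \<Rightarrow> 'a" where
  "f_ell p nabs l z = (\<Sum>x\<in>(Lam::'a set). cc x * x ^ l * pexp nabs (z * plog nabs (x ^ tribN p nabs)))"

definition root_of_unity :: "'a::field \<Rightarrow> bool" where
  "root_of_unity \<xi> \<longleftrightarrow> (\<exists>k>0. \<xi> ^ k = 1)"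

text \<open>Twisted rational zero, with r = s/m written in lowest terms (m > 0).
  The mu_i are determinations of lambda_i^r; they are algebraic automatically.\<close>
definition twisted_rational_zero :: "'a::field_char_0 itself \<Rightarrow> rat \<Rightarrow> bool" where
  "twisted_rational_zero _ r = (case quotient_of r of (s, m) \<Rightarrow>
     (\<exists>l1 l2 l3 \<mu>1 \<mu>2 \<mu>3 \<xi>1 \<xi>2 \<xi>3 :: 'a.
        (Lam::'a set) = {l1, l2, l3} \<and> l1 \<noteq> l2 \<and> l1 \<noteq> l3 \<and> l2 \<noteq> l3 \<and>
        \<mu>1 ^ nat m = l1 powi s \<and> \<mu>2 ^ nat m = l2 powi s \<and> \<mu>3 ^ nat m = l3 powi s \<and>
        root_of_unity \<xi>1 \<and> root_of_unity \<xi>2 \<and> root_of_unity \<xi>3 \<and>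
        \<xi>1 * cc l1 * \<mu>1 + \<xi>2 * cc l2 * \<mu>2 + \<xi>3 * cc l3 * \<mu>3 = 0))"

end

theory Submission
  imports Defs
begin

lemma tribP'_nz: "tribP' (x::'a::field_char_0) = 0 \<Longrightarrow> tribP x \<noteq> 0"
proof
  assume a: "tribP' x = 0" and b: "tribP x = 0"
  have "(3*x+1)*(x-1) = 0" using a unfolding tribP'_def by (simp add: algebra_simps power2_eq_square)
  then have "3*x+1 = 0 \<or> x - 1 = 0" by simp
  then have "x = 1 \<or> 3*x = -1" by (metis add.commute add_eq_0_iff eq_iff_diff_eq_0)
  then show False
  proof
    assume "x = 1" then show False using b by (simp add: tribP_def)
  next
    assume h: "3*x = -1"
    have "27 * tribP x = (3*x)^3 - 3*(3*x)^2 - 9*(3*x) - 27" by (simp add: tribP_def algebra_simps power2_eq_square power3_eq_cube)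
    also have "\<dots> = -22" using h by simp
    finally show False using b by simp
  qed
qed

lemma alg_closed_root:
  assumes ac: "\<forall>q::'a::field_char_0 poly. 0 < degree q \<longrightarrow> (\<exists>x. poly q x = 0)"
  and "m > 0"
  shows "\<exists>x. x ^ m = (c::'a)"
proof -
  have "degree ([:-c:] + monom 1 m) = m" using assms(2)
    by (subst degree_add_eq_right) (auto simp: degree_monom_eq)
  then have "\<exists>x. poly ([:-c:] + monom 1 m) x = 0" using ac[rule_format, of "[:-c:] + monom 1 m"] assms(2) by metis
  then obtain x where "poly ([:-c:] + monom 1 m) x = 0" by blast
  then show ?thesis by (auto simp: poly_monom)
qed

lemma three_roots:
  assumes ac: "\<forall>q::'a::field_char_0 poly. 0 < degree q \<longrightarrow> (\<exists>x. poly q x = 0)"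
  shows "\<exists>l1 l2 l3::'a. (Lam::'a set) = {l1,l2,l3} \<and> l1 \<noteq> l2 \<and> l1 \<noteq> l3 \<and> l2 \<noteq> l3"
proof -
  have "degree [:-1,-1,-1,1::'a:] = 3" by simp
  then obtain l1 where "poly [:-1,-1,-1,1::'a:] l1 = 0" using ac by (metis zero_less_numeral)
  then have h1: "l1^3 - l1^2 - l1 - 1 = 0" by (simp add: algebra_simps power2_eq_square power3_eq_cube)
  define c where "c = l1^2 - l1 - 1"
  have "degree [:c, l1 - 1, 1::'a:] = 2" by simp
  then obtain l2 where "poly [:c, l1 - 1, 1::'a:] l2 = 0" using ac by (metis zero_less_numeral)
  then have h2: "l2^2 + (l1 - 1)*l2 + c = 0" by (simp add: algebra_simps power2_eq_square)
  define l3 where "l3 = 1 - l1 - l2"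
  have fac: "tribP x = (x-l1)*(x-l2)*(x-l3)" for x
  proof -
    have "l1 * c = 1" using h1 unfolding c_def by (simp add: algebra_simps power2_eq_square power3_eq_cube)
    moreover have "l2 * l3 = c" using h2 unfolding l3_def by (simp add: algebra_simps power2_eq_square)
    have e: "(x-l1)*(x-l2)*(x-l3) = x^3 - (l1+l2+l3)*x^2 + (l1*(l2+l3) + l2*l3)*x - l1*(l2*l3)"
      by (simp add: algebra_simps power2_eq_square power3_eq_cube)
    have "l1+l2+l3 = 1" unfolding l3_def by simp
    moreover have "l1*(l2+l3) + l2*l3 = -1" using \<open>l2*l3 = c\<close> unfolding l3_def c_def by (simp add: algebra_simps power2_eq_square)
    ultimately show ?thesis unfolding e tribP_def using \<open>l1*c = 1\<close> \<open>l2*l3 = c\<close> by simp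
  qed
  have l23: "l2 * l3 = c" using h2 unfolding l3_def by (simp add: algebra_simps power2_eq_square)
  have "l1 \<noteq> l2"
  proof
    assume "l1 = l2"
    then have "tribP' l1 = 0" using l23 unfolding tribP'_def l3_def c_def by (simp add: algebra_simps power2_eq_square)
    moreover have "tribP l1 = 0" using fac by simp
    ultimately show False using tribP'_nz by blast
  qed
  moreover have "l1 \<noteq> l3"
  proof
    assume "l1 = l3"
    then have l2e: "l2 = 1 - 2*l1" unfolding l3_def by (simp add: algebra_simps)
    have "tribP' l1 = l2^2 + (l1-1)*l2 + c" unfolding l2e tribP'_def c_def by (simp add: algebra_simps power2_eq_square)
    then have "tribP' l1 = 0" using h2 by simp
    moreover have "tribP l1 = 0" using fac by simp
    ultimately show False using tribP'_nz by blast
  qed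
  moreover have "l2 \<noteq> l3"
  proof
    assume "l2 = l3"
    then have l1e: "l1 = 1 - 2*l2" unfolding l3_def by (simp add: algebra_simps)
    have "tribP' l2 = l2^2 + (l1-1)*l2 + c" unfolding l1e tribP'_def c_def by (simp add: algebra_simps power2_eq_square)
    then have "tribP' l2 = 0" using h2 by simp
    moreover have "tribP l2 = 0" using fac by simp
    ultimately show False using tribP'_nz by blast
  qed
  moreover have "Lam = {l1,l2,l3}" unfolding Lam_def using fac by auto
  ultimately show ?thesis by blast
qed

locale cpl =
  fixes p :: nat and nabs :: "'a::field_char_0 \<Rightarrow> real"
  assumes prime: "prime p" and p2: "p \<noteq> 2" and cp: "Cp_like p nabs"
begin

lemma nn: "0 \<le> nabs x" using cp unfolding Cp_like_def by blast
lemma nz[simp]: "nabs x = 0 \<longleftrightarrow> x = 0" using cp unfolding Cp_like_def by blast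
lemma nmult: "nabs (x*y) = nabs x * nabs y" using cp unfolding Cp_like_def by blast
lemma ultra: "nabs (x+y) \<le> max (nabs x) (nabs y)" using cp unfolding Cp_like_def by blast
lemma nrat: "nabs (of_rat r) = padic_abs_rat p r" using cp unfolding Cp_like_def by blast
lemma complete: fixes X :: "nat \<Rightarrow> 'a" shows "(\<forall>e>0. \<exists>M. \<forall>m\<ge>M. \<forall>n\<ge>M. nabs (X m - X n) < e) \<Longrightarrow>
          (\<exists>L. \<forall>e>0. \<exists>M. \<forall>n\<ge>M. nabs (X n - L) < e)" using cp unfolding Cp_like_def by (elim conjE) (erule allE[of _ X], blast)
lemma algc: "\<forall>q::'a poly. 0 < degree q \<longrightarrow> (\<exists>x. poly q x = 0)" using cp unfolding Cp_like_def by blast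

lemma p_gt: "p \<ge> 3" using prime p2 prime_ge_2_nat by (metis le_neq_implies_less less_2_cases_iff not_less numeral_2_eq_2 numeral_3_eq_3 prime_gt_1_nat Suc_leI)

lemma n1[simp]: "nabs 1 = 1"
proof -
  have "nabs 1 = nabs 1 * nabs 1" using nmult[of 1 1] by simp
  moreover have "nabs 1 \<noteq> 0" by simp
  ultimately show ?thesis by simp
qed

lemma n0[simp]: "nabs 0 = 0" by simp

lemma nminus1: "nabs (-1) = 1"
proof -
  have "nabs (-1) * nabs (-1) = 1" using nmult[of "-1" "-1"] by simp
  then show ?thesis using nn[of "-1"] by (metis abs_of_nonneg abs_square_eq_1 power2_eq_square)
qed

lemma nminus[simp]: "nabs (-x) = nabs x"
  using nmult[of "-1" x] nminus1 by simp

lemma ndiff_comm: "nabs (x - y) = nabs (y - x)"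
  by (metis minus_diff_eq nminus)

lemma ndiff: "nabs (x - y) \<le> max (nabs x) (nabs y)"
  using ultra[of x "-y"] by simp

lemma npow: "nabs (x^n) = nabs x ^ n"
  by (induction n) (auto simp: nmult)

lemma ninv: "nabs (inverse x) = inverse (nabs x)"
proof (cases "x = 0")
  case False
  then have "nabs x * nabs (inverse x) = 1" using nmult[of x "inverse x"] by simp
  then show ?thesis by (metis inverse_unique)
qed simp

lemma ndiv: "nabs (x / y) = nabs x / nabs y"
  by (simp add: divide_inverse nmult ninv)

lemma ntri: "nabs (x + y) \<le> nabs x + nabs y"
  using ultra[of x y] nn[of x] nn[of y] by linarith

lemma nsum_le:
  assumes "finite S" "\<And>i. i \<in> S \<Longrightarrow> nabs (f i) \<le> B" "0 \<le> B"
  shows "nabs (sum f S) \<le> B"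
  using assms
proof (induction S rule: finite_induct)
  case (insert x F)
  have "nabs (f x) \<le> B" using insert by auto
  moreover have "nabs (sum f F) \<le> B" using insert by auto
  ultimately show ?case using ultra[of "f x" "sum f F"] insert(1,2) by simp
qed simp

lemma nabs_of_int_mult:
  assumes "a \<noteq> 0"
  shows "nabs (of_int a) * real p ^ multiplicity (int p) a = 1"
proof -
  have pp: "real p > 0" using prime prime_gt_0_nat by simp
  have "nabs (of_int a) = nabs (of_rat (of_int a))" by simp
  also have "\<dots> = padic_abs_rat p (of_int a)" by (rule nrat)
  also have "\<dots> = real p powr (- real (multiplicity (int p) a))"
    using assms unfolding padic_abs_rat_def padic_val_rat_def
    by (simp add: quotient_of_int[unfolded Rat.of_int_def[symmetric]])
  finally show ?thesis using pp by (simp add: powr_minus powr_realpow)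
qed

end

context cpl begin

lemma pgt0: "real p > 0" using prime prime_gt_0_nat by simp

lemma nint_le1: "nabs (of_int a) \<le> 1"
proof (cases "a = 0")
  case False
  have "real p ^ multiplicity (int p) a \<ge> 1" using pgt0 prime prime_gt_1_nat
    by (simp add: one_le_power)
  then show ?thesis using nabs_of_int_mult[OF False] nn[of "of_int a"]
    by (metis mult_le_cancel_left1 not_le)
qed simp

lemma nnat_le1: "nabs (of_nat n) \<le> 1"
  using nint_le1[of "int n"] by simp

lemma nint_unit: "\<not> int p dvd a \<Longrightarrow> nabs (of_int a) = 1"
  using nabs_of_int_mult[of a] not_dvd_imp_multiplicity_0[of "int p" a] by fastforce

lemma np: "nabs (of_nat p) = 1 / real p"
proof -
  have "multiplicity (int p) (int p) = 1"
    by (rule multiplicity_self) (use prime in \<open>auto simp: prime_gt_1_nat\<close>)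
  then have "nabs (of_int (int p)) * real p = 1" using nabs_of_int_mult[of "int p"] prime
    by (simp add: prime_gt_0_nat)
  then show ?thesis using pgt0 by (simp add: field_simps)
qed

definition th :: real where "th = real p powr (1 / (real p - 1))"

lemma th_pos: "th > 0" unfolding th_def using pgt0 by simp

lemma th_pow: "th ^ (p - 1) = real p"
proof -
  have "th ^ (p - 1) = real p powr ((1 / (real p - 1)) * real (p - 1))"
    unfolding th_def using pgt0 by (simp add: powr_realpow[symmetric] powr_powr)
  also have "real (p - 1) = real p - 1" using p_gt by simp
  also have "1 / (real p - 1) * (real p - 1) = 1" using p_gt by simp
  finally show ?thesis using pgt0 by simp
qed

lemma th_ge1: "th \<ge> 1"
  unfolding th_def using p_gt by (intro ge_one_powr_ge_zero) auto

lemma th_lt: "th < real p"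
proof (rule ccontr)
  assume "\<not> th < real p"
  then have "real p ^ (p - 1) \<le> th ^ (p - 1)" using pgt0 by (simp add: power_mono)
  then have "real p ^ (p - 1) \<le> real p ^ 1" using th_pow by simp
  moreover have "real p ^ 1 < real p ^ (p - 1)" using p_gt
    by (intro power_strict_increasing) auto
  ultimately show False by simp
qed

lemma bern: "1 + a * (p - 1) \<le> p ^ a"
proof (induction a)
  case (Suc a)
  have "1 + Suc a * (p - 1) = 1 + a * (p-1) + (p - 1)" by simp
  also have "\<dots> \<le> p^a + (p - 1)" using Suc by simp
  also have "\<dots> \<le> p^a + (p-1) * p^a"
  proof -
    have "1 \<le> p^a" using p_gt by simp
    then have "(p-1)*1 \<le> (p-1)*p^a" by (rule mult_le_mono2)
    then show ?thesis by linarith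
  qed
  also have "\<dots> = p ^ Suc a" using p_gt by (simp add: algebra_simps)
  finally show ?case .
qed simp

lemma ninvnat:
  assumes "j > 0"
  shows "1 \<le> nabs (of_nat j :: 'a) * th ^ (j - 1)"
proof -
  define a where "a = multiplicity (int p) (int j)"
  have m: "nabs (of_int (int j) :: 'a) * real p ^ a = 1" unfolding a_def
    using nabs_of_int_mult[of "int j"] assms by simp
  have "int p ^ a dvd int j" unfolding a_def by (rule multiplicity_dvd)
  then have "p ^ a dvd j" by (metis of_nat_dvd_iff of_nat_power)
  then have "p ^ a \<le> j" using assms by (simp add: dvd_imp_le)
  then have "a * (p - 1) \<le> j - 1" using bern[of a] by linarith
  then have "th ^ (a * (p - 1)) \<le> th ^ (j - 1)" using th_ge1 by (simp add: power_increasing)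
  moreover have "th ^ (a * (p - 1)) = real p ^ a" using th_pow by (metis power_mult mult.commute)
  ultimately have "real p ^ a \<le> th ^ (j - 1)" by simp
  then have "nabs (of_nat j :: 'a) * real p ^ a \<le> nabs (of_nat j :: 'a) * th ^ (j - 1)"
    using nn by (simp add: mult_left_mono)
  then show ?thesis using m by simp
qed

lemma nfact_rec: "nabs (fact n :: 'a) = (1 / real p) ^ (n div p) * nabs (fact (n div p) :: 'a)"
proof (induction n)
  case 0
  then show ?case by simp
next
  case (Suc n)
  have fs: "nabs (fact (Suc n) :: 'a) = nabs (of_nat (Suc n) :: 'a) * nabs (fact n :: 'a)"
    by (simp add: nmult)
  show ?case
  proof (cases "p dvd Suc n")
    case False
    then have "Suc n div p = n div p" by (simp add: div_Suc dvd_eq_mod_eq_0)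
    moreover have "nabs (of_nat (Suc n) :: 'a) = 1" using nint_unit[of "int (Suc n)"] False
      by (metis of_int_of_nat_eq of_nat_dvd_iff)
    ultimately show ?thesis using fs Suc by simp
  next
    case True
    define i where "i = Suc n div p"
    have i: "i = Suc (n div p)" unfolding i_def using True by (simp add: div_Suc dvd_eq_mod_eq_0)
    have sn: "Suc n = p * i" unfolding i_def using True by simp
    have "nabs (of_nat (Suc n) :: 'a) = (1 / real p) * nabs (of_nat i :: 'a)"
      unfolding sn by (simp add: nmult np)
    moreover have "nabs (fact i :: 'a) = nabs (of_nat i :: 'a) * nabs (fact (n div p) :: 'a)"
      unfolding i by (simp add: nmult)
    ultimately show ?thesis using fs Suc by (simp add: i_def[symmetric] i)
  qed
qed

lemma nfact: "1 \<le> nabs (fact n :: 'a) * th ^ n"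
proof (induction n rule: less_induct)
  case (less n)
  show ?case
  proof (cases "n = 0")
    case False
    define q where "q = n div p"
    have qlt: "q < n" unfolding q_def using False p_gt by simp
    have pq: "p * q \<le> n" unfolding q_def by simp
    have "(p - 1) * q = p * q - q" by (simp add: diff_mult_distrib)
    then have le: "(p - 1) * q \<le> n - q" using pq by linarith
    have "th ^ ((p - 1) * q) \<le> th ^ (n - q)" using th_ge1 le by (rule power_increasing[rotated])
    moreover have "th ^ ((p - 1) * q) = real p ^ q" using th_pow by (simp add: power_mult)
    ultimately have A: "real p ^ q \<le> th ^ (n - q)" by simp
    have B: "1 \<le> (1 / real p) ^ q * th ^ (n - q)"
    proof -
      have "(1 / real p) ^ q * th ^ (n - q) \<ge> (1 / real p) ^ q * real p ^ q"
        using A pgt0 by (intro mult_left_mono) auto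
      moreover have "(1 / real p) ^ q * real p ^ q = 1" using pgt0 by (simp add: power_one_over flip: power_mult_distrib)
      ultimately show ?thesis by simp
    qed
    have th_split: "th ^ n = th ^ q * th ^ (n - q)" using qlt by (simp flip: power_add)
    have C: "nabs (fact n :: 'a) * th ^ n = (nabs (fact q :: 'a) * th ^ q) * ((1 / real p) ^ q * th ^ (n - q))"
      using nfact_rec[of n] unfolding th_split q_def[symmetric] by (simp only: ac_simps)
    have D: "nabs (fact q :: 'a) * th ^ q \<ge> 1" using less qlt by simp
    show ?thesis unfolding C using B D
      by (metis mult_mono' mult_1 zero_le_one order_trans)
  qed simp
qed

end

context cpl begin

definition conv :: "(nat \<Rightarrow> 'a) \<Rightarrow> 'a \<Rightarrow> bool" where
  "conv X L \<longleftrightarrow> (\<forall>e>0. \<exists>M. \<forall>n\<ge>M. nabs (X n - L) < e)"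

lemma small_eq: assumes "\<And>e. e > 0 \<Longrightarrow> nabs (a - b) < e" shows "a = b"
proof (rule ccontr)
  assume "a \<noteq> b"
  then have "nabs (a - b) \<noteq> 0" by simp
  then have "nabs (a - b) > 0" using nn[of "a-b"] by linarith
  then have "nabs (a - b) < nabs (a - b)" using assms by blast
  then show False by simp
qed

lemma ultra_diff: "nabs (a - b) \<le> max (nabs (a - c)) (nabs (c - b))"
proof -
  have "a - b = (a - c) + (c - b)" by simp
  then show ?thesis using ultra[of "a - c" "c - b"] by simp
qed

lemma conv_unique: assumes "conv X a" "conv X b" shows "a = b"
proof (rule small_eq)
  fix e :: real assume e: "e > 0"
  obtain M1 where M1: "\<forall>n\<ge>M1. nabs (X n - a) < e" using assms(1) e unfolding conv_def by blast
  obtain M2 where M2: "\<forall>n\<ge>M2. nabs (X n - b) < e" using assms(2) e unfolding conv_def by blast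
  define n where "n = max M1 M2"
  have "nabs (a - b) \<le> max (nabs (a - X n)) (nabs (X n - b))" by (rule ultra_diff)
  then have "nabs (a - b) \<le> max (nabs (X n - b)) (nabs (X n - a))" using ndiff_comm[of a "X n"] by simp
  moreover have "nabs (X n - b) < e" "nabs (X n - a) < e" using M1 M2 n_def by auto
  ultimately show "nabs (a - b) < e" by simp
qed

lemma conv_close: assumes "conv X a" "conv Y b" "\<And>e. e > 0 \<Longrightarrow> \<exists>M. \<forall>n\<ge>M. nabs (X n - Y n) < e"
  shows "a = b"
proof (rule small_eq)
  fix e :: real assume e: "e > 0"
  obtain M1 where M1: "\<forall>n\<ge>M1. nabs (X n - a) < e" using assms(1) e unfolding conv_def by blast
  obtain M2 where M2: "\<forall>n\<ge>M2. nabs (Y n - b) < e" using assms(2) e unfolding conv_def by blast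
  obtain M3 where M3: "\<forall>n\<ge>M3. nabs (X n - Y n) < e" using assms(3) e by blast
  define n where "n = max M1 (max M2 M3)"
  have "nabs (a - b) \<le> max (nabs (a - X n)) (nabs (X n - b))" by (rule ultra_diff)
  moreover have "nabs (X n - b) \<le> max (nabs (X n - Y n)) (nabs (Y n - b))" by (rule ultra_diff)
  ultimately have "nabs (a - b) \<le> max (nabs (X n - a)) (max (nabs (X n - Y n)) (nabs (Y n - b)))"
    using ndiff_comm[of a "X n"] by simp
  moreover have "nabs (X n - a) < e" "nabs (X n - Y n) < e" "nabs (Y n - b) < e" using M1 M2 M3 n_def by auto
  ultimately show "nabs (a - b) < e" by simp
qed

lemma conv_bound: assumes "conv X L" "\<And>n. nabs (X n) \<le> B" "B > 0" shows "nabs L \<le> B"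
proof -
  obtain M where M: "\<forall>n\<ge>M. nabs (X n - L) < B" using assms(1,3) unfolding conv_def by blast
  have "nabs (L - 0) \<le> max (nabs (L - X M)) (nabs (X M - 0))" by (rule ultra_diff)
  then have "nabs L \<le> max (nabs (X M)) (nabs (X M - L))" using ndiff_comm[of L "X M"] by simp
  then show ?thesis using M assms(2)[of M] by auto
qed

lemma conv_mult: assumes "conv X a" "conv Y b" "\<And>n. nabs (X n) \<le> 1" "nabs b \<le> 1"
  shows "conv (\<lambda>n. X n * Y n) (a * b)"
  unfolding conv_def
proof (intro allI impI)
  fix e :: real assume e: "e > 0"
  obtain M1 where M1: "\<forall>n\<ge>M1. nabs (X n - a) < e" using assms(1) e unfolding conv_def by blast
  obtain M2 where M2: "\<forall>n\<ge>M2. nabs (Y n - b) < e" using assms(2) e unfolding conv_def by blast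
  show "\<exists>M. \<forall>n\<ge>M. nabs (X n * Y n - a * b) < e"
  proof (intro exI allI impI)
    fix n assume n: "n \<ge> max M1 M2"
    have "X n * Y n - a * b = X n * (Y n - b) + (X n - a) * b" by (simp add: algebra_simps)
    then have "nabs (X n * Y n - a * b) \<le> max (nabs (X n) * nabs (Y n - b)) (nabs (X n - a) * nabs b)"
      using ultra[of "X n * (Y n - b)" "(X n - a) * b"] by (simp add: nmult)
    moreover have "nabs (X n) * nabs (Y n - b) \<le> 1 * nabs (Y n - b)" using assms(3)[of n] nn[of "Y n - b"]
      by (rule mult_right_mono)
    moreover have "nabs (Y n - b) < e" using M2 n by simp
    moreover have "nabs (X n - a) * nabs b \<le> nabs (X n - a) * 1" using assms(4) nn[of "X n - a"]
      by (rule mult_left_mono)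
    moreover have "nabs (X n - a) < e" using M1 n by simp
    ultimately show "nabs (X n * Y n - a * b) < e" by linarith
  qed
qed

lemma the_sums: assumes h: "nsums nabs f s" shows "(THE s. nsums nabs f s) = s"
proof (rule the_equality)
  show "nsums nabs f s" by (rule h)
next
  fix t assume "nsums nabs f t"
  then show "t = s" using h conv_unique[of "\<lambda>n. \<Sum>k<n. f k" t s] unfolding nsums_def conv_def by blast
qed

lemma sum_ivl_diff: fixes m n :: nat and f :: "nat \<Rightarrow> 'a" shows "n \<le> m \<Longrightarrow> (\<Sum>k<m. f k) - (\<Sum>k<n. f k) = (\<Sum>k\<in>{n..<m}. f k)"
  using sum_diff_nat_ivl[of 0 n m f] by (simp add: atLeast0LessThan)

lemma null_sums:
  assumes "\<And>e. e > 0 \<Longrightarrow> \<exists>M. \<forall>n\<ge>M. nabs (f n) < e"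
  shows "\<exists>s. nsums nabs f s"
proof -
  define S where "S n = (\<Sum>k<n. f k)" for n
  have "\<forall>e>0. \<exists>M. \<forall>m\<ge>M. \<forall>n\<ge>M. nabs (S m - S n) < e"
  proof (intro allI impI)
    fix e :: real assume e: "e > 0"
    obtain M where M: "\<forall>n\<ge>M. nabs (f n) < e/2" using assms[of "e/2"] e by auto
    have A: "nabs (S m - S n) \<le> e/2" if "M \<le> n" "n \<le> m" for m n
      unfolding S_def sum_ivl_diff[OF that(2)]
      by (rule nsum_le) (use M that e in \<open>auto intro: less_imp_le\<close>)
    show "\<exists>M. \<forall>m\<ge>M. \<forall>n\<ge>M. nabs (S m - S n) < e"
    proof (intro exI allI impI)
      fix m n assume "m \<ge> M" "n \<ge> M"
      then have "nabs (S m - S n) \<le> e/2"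
        using A[of n m] A[of m n] ndiff_comm[of "S m" "S n"] by (cases "n \<le> m") auto
      then show "nabs (S m - S n) < e" using e by simp
    qed
  qed
  then obtain L where "\<forall>e>0. \<exists>M. \<forall>n\<ge>M. nabs (S n - L) < e" using complete by blast
  then show ?thesis unfolding nsums_def S_def by blast
qed

definition r :: real where "r = th / real p"

lemma r_pos: "r > 0" unfolding r_def using th_pos pgt0 by simp
lemma r_lt1: "r < 1" unfolding r_def using th_lt pgt0 by simp

lemma geom: assumes "e > 0" shows "\<exists>M. \<forall>n\<ge>M. r ^ n < e"
proof -
  obtain M where "r ^ M < e" using real_arch_pow_inv[OF assms r_lt1] by blast
  moreover have "r ^ n \<le> r ^ M" if "n \<ge> M" for n
    using r_pos r_lt1 that by (intro power_decreasing) auto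
  ultimately show ?thesis by (meson le_less_trans)
qed

lemma small_pow: assumes "nabs z \<le> 1 / real p" shows "nabs (z ^ n) \<le> (1 / real p) ^ n"
  unfolding npow using assms nn by (intro power_mono) auto

lemma exp_term: assumes "nabs z \<le> 1 / real p" shows "nabs (z ^ n / fact n) \<le> r ^ n"
proof -
  have f: "1 \<le> nabs (fact n :: 'a) * th ^ n" by (rule nfact)
  have fp: "nabs (fact n :: 'a) > 0" using f by (metis mult_zero_left nn not_le order_le_less zero_less_one)
  have "nabs (z ^ n / fact n) = nabs (z ^ n) / nabs (fact n :: 'a)" by (simp add: ndiv)
  also have "\<dots> \<le> (1 / real p) ^ n / nabs (fact n :: 'a)"
    using small_pow[OF assms] fp by (simp add: divide_right_mono)
  also have "\<dots> \<le> (1 / real p) ^ n * th ^ n"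
    using f fp pgt0 by (simp add: field_simps)
  also have "\<dots> = r ^ n" unfolding r_def by (simp add: power_divide)
  finally show ?thesis .
qed

definition E :: "nat \<Rightarrow> 'a \<Rightarrow> 'a" where "E K z = (\<Sum>n<K. z ^ n / fact n)"

lemma E_bound: assumes "nabs z \<le> 1 / real p" shows "nabs (E K z) \<le> 1"
  unfolding E_def
proof (rule nsum_le)
  fix n show "nabs (z ^ n / fact n) \<le> 1" using exp_term[OF assms, of n] r_pos r_lt1
    by (meson less_imp_le order_trans power_le_one)
qed auto

lemma pexp_conv: assumes "nabs z \<le> 1 / real p" shows "conv (\<lambda>K. E K z) (pexp nabs z)"
proof -
  have "\<exists>s. nsums nabs (\<lambda>n. z ^ n / fact n) s"
  proof (rule null_sums)
    fix e :: real assume "e > 0"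
    then obtain M where "\<forall>n\<ge>M. r ^ n < e" using geom by blast
    then show "\<exists>M. \<forall>n\<ge>M. nabs (z ^ n / fact n) < e" using exp_term[OF assms] by (meson le_less_trans)
  qed
  then obtain s where s: "nsums nabs (\<lambda>n. z ^ n / fact n) s" by blast
  have "pexp nabs z = s" unfolding pexp_def using the_sums[OF s] .
  then show ?thesis using s unfolding nsums_def conv_def E_def by simp
qed

lemma pexp_bound: assumes "nabs z \<le> 1 / real p" shows "nabs (pexp nabs z) \<le> 1"
  using conv_bound[OF pexp_conv[OF assms] E_bound[OF assms]] by simp

end

context cpl begin

lemma nsum_add: "nabs (u + v) \<le> 1 / real p" if "nabs u \<le> 1 / real p" "nabs v \<le> 1 / real p"
  using ultra[of u v] that by simp

lemma nmul_small: "nabs (of_nat m * u) \<le> nabs u"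
proof -
  have "nabs (of_nat m) * nabs u \<le> 1 * nabs u" using nnat_le1[of m] nn[of u] by (rule mult_right_mono)
  then show ?thesis by (simp add: nmult)
qed

lemma E_prod: "E K u * E K v = (\<Sum>(i,j)\<in>{..<K}\<times>{..<K}. u^i / fact i * (v^j / fact j))"
  unfolding E_def sum_product sum.cartesian_product by simp

lemma E_add: "E K (u + v) = (\<Sum>(i,j)\<in>{(i,j). i+j < K}. u^i / fact i * (v^j / fact j))"
proof -
  have "(u + v) ^ n / fact n = (\<Sum>i\<le>n. u^i / fact i * (v^(n-i) / fact (n-i)))" for n
  proof -
    have "(u + v) ^ n / fact n = (\<Sum>i\<le>n. of_nat (n choose i) * u^i * v^(n-i) / fact n)"
      unfolding binomial_ring by (simp add: sum_divide_distrib)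
    also have "\<dots> = (\<Sum>i\<le>n. u^i / fact i * (v^(n-i) / fact (n-i)))"
      by (rule sum.cong) (auto simp: binomial_fact)
    finally show ?thesis .
  qed
  then have "E K (u + v) = (\<Sum>n<K. \<Sum>i\<le>n. u^i / fact i * (v^(n-i) / fact (n-i)))"
    unfolding E_def by simp
  also have "\<dots> = (\<Sum>(i,j)\<in>{(i,j). i+j < K}. u^i / fact i * (v^j / fact j))"
    by (rule sum.triangle_reindex[symmetric])
  finally show ?thesis .
qed

lemma E_add_diff:
  assumes u: "nabs u \<le> 1 / real p" and v: "nabs v \<le> 1 / real p"
  shows "nabs (E K u * E K v - E K (u + v)) \<le> r ^ K"
proof -
  define A where "A = {..<K}\<times>{..<K}"
  define B where "B = {(i,j). i + j < (K::nat)}"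
  define g where "g = (\<lambda>(i,j). u^i / fact i * (v^j / fact j))"
  have fA: "finite A" unfolding A_def by simp
  have BA: "B \<subseteq> A" unfolding A_def B_def by auto
  have "E K u * E K v - E K (u + v) = sum g A - sum g B"
    unfolding E_prod E_add A_def B_def g_def by simp
  also have "\<dots> = sum g (A - B)" using sum.subset_diff[OF BA fA, of g] by simp
  finally have eq: "E K u * E K v - E K (u + v) = sum g (A - B)" .
  show ?thesis unfolding eq
  proof (rule nsum_le)
    show "finite (A - B)" using fA by simp
    show "0 \<le> r ^ K" using r_pos by simp
    fix x assume x: "x \<in> A - B"
    obtain i j where ij: "x = (i,j)" by force
    have K: "K \<le> i + j" using x ij unfolding B_def by auto
    have "nabs (g x) = nabs (u^i / fact i * (v^j / fact j))" unfolding ij g_def by (simp only: case_prod_conv)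
    also have "\<dots> = nabs (u^i / fact i) * nabs (v^j / fact j)" by (rule nmult)
    also have "\<dots> \<le> r ^ i * r ^ j"
      using exp_term[OF u, of i] exp_term[OF v, of j] nn r_pos by (intro mult_mono) auto
    also have "\<dots> = r ^ (i + j)" by (simp add: power_add)
    also have "\<dots> \<le> r ^ K" using r_pos r_lt1 K by (intro power_decreasing) auto
    finally show "nabs (g x) \<le> r ^ K" .
  qed
qed

lemma pexp_add:
  assumes u: "nabs u \<le> 1 / real p" and v: "nabs v \<le> 1 / real p"
  shows "pexp nabs (u + v) = pexp nabs u * pexp nabs v"
proof -
  have c1: "conv (\<lambda>K. E K u * E K v) (pexp nabs u * pexp nabs v)"
    by (rule conv_mult[OF pexp_conv[OF u] pexp_conv[OF v] E_bound[OF u] pexp_bound[OF v]])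
  have c2: "conv (\<lambda>K. E K (u + v)) (pexp nabs (u + v))" by (rule pexp_conv[OF nsum_add[OF u v]])
  show ?thesis
  proof (rule conv_close[OF c2 c1])
    fix e :: real assume "e > 0"
    then obtain M where M: "\<forall>n\<ge>M. r ^ n < e" using geom by blast
    show "\<exists>M. \<forall>n\<ge>M. nabs (E n (u + v) - E n u * E n v) < e"
    proof (intro exI allI impI)
      fix n assume "n \<ge> M"
      have "nabs (E n (u + v) - E n u * E n v) = nabs (E n u * E n v - E n (u + v))" by (rule ndiff_comm)
      also have "\<dots> \<le> r ^ n" by (rule E_add_diff[OF u v])
      finally show "nabs (E n (u + v) - E n u * E n v) < e" using M \<open>n \<ge> M\<close> by (meson le_less_trans)
    qed
  qed
qed

lemma pexp_0: "pexp nabs 0 = 1"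
proof -
  have "conv (\<lambda>K. E K 0) 1" unfolding conv_def
  proof (intro allI impI exI)
    fix e :: real and n :: nat assume "e > 0" "n \<ge> 1"
    then have "E n 0 = 1" unfolding E_def by (cases n) (auto simp: lessThan_Suc_eq_insert_0 zero_power sum.reindex)
    then show "nabs (E n 0 - 1) < e" using \<open>e > 0\<close> by simp
  qed
  moreover have "conv (\<lambda>K. E K 0) (pexp nabs 0)" by (rule pexp_conv) (use pgt0 in simp)
  ultimately show ?thesis using conv_unique by blast
qed

lemma pexp_nat: assumes u: "nabs u \<le> 1 / real p" shows "pexp nabs (of_nat m * u) = pexp nabs u ^ m"
proof (induction m)
  case 0 then show ?case by (simp add: pexp_0)
next
  case (Suc m)
  have b: "nabs (of_nat m * u) \<le> 1 / real p"
    using nmul_small[of m u] u by simp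
  have "pexp nabs (of_nat (Suc m) * u) = pexp nabs (u + of_nat m * u)" by (simp add: algebra_simps)
  also have "\<dots> = pexp nabs u * pexp nabs (of_nat m * u)" by (rule pexp_add[OF u b])
  finally show ?case using Suc by simp
qed

lemma pexp_int: assumes u: "nabs u \<le> 1 / real p" shows "pexp nabs (of_int s * u) = pexp nabs u powi s"
proof (cases "s \<ge> 0")
  case True
  then obtain m where "s = int m" by (metis nonneg_eq_int)
  then show ?thesis using pexp_nat[OF u, of m] by simp
next
  case False
  then obtain m where m: "s = - int m" by (metis neg_int_cases le_less nat_le_linear not_le)
  have um: "nabs (- u) \<le> 1 / real p" using u by simp
  have b: "nabs (of_nat m * u) \<le> 1 / real p"
    using nmul_small[of m u] u by simp
  have "pexp nabs (of_nat m * u) * pexp nabs (- (of_nat m * u)) = pexp nabs 0"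
    using pexp_add[OF b, of "- (of_nat m * u)"] b by simp
  then have "pexp nabs (- (of_nat m * u)) = inverse (pexp nabs u ^ m)"
    unfolding pexp_0 pexp_nat[OF u] by (metis inverse_unique)
  then show ?thesis unfolding m by (simp add: power_int_minus)
qed

end

lemma exp_oo_ln: "fps_exp (1::'a::field_char_0) oo fps_ln 1 = 1 + fps_X"
proof -
  have "(fps_exp (1::'a) - 1) oo fps_ln 1 = fps_X"
    using fps_inv_fps_exp_compose(2)[of "1::'a"] fps_ln_fps_exp_inv[of "1::'a"] by simp
  then have "(fps_exp (1::'a) - 1 + 1) oo fps_ln 1 = fps_X + 1"
    by (simp only: fps_compose_add_distrib fps_compose_1)
  then show ?thesis by (simp add: add.commute)
qed

lemma trunc_pow:
  fixes A B :: "'a::comm_ring_1 fps"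
  assumes "\<And>i. i \<le> k \<Longrightarrow> A $ i = B $ i"
  shows "i \<le> k \<Longrightarrow> (A ^ n) $ i = (B ^ n) $ i"
proof (induction n arbitrary: i)
  case (Suc n)
  have "(A ^ Suc n) $ i = (\<Sum>j=0..i. A$j * (A^n)$(i - j))" by (simp add: fps_mult_nth)
  also have "\<dots> = (\<Sum>j=0..i. B$j * (B^n)$(i - j))"
    using Suc assms by (intro sum.cong) auto
  also have "\<dots> = (B ^ Suc n) $ i" by (simp add: fps_mult_nth)
  finally show ?case .
qed simp

lemma pow_zero_low:
  fixes A :: "'a::comm_ring_1 fps"
  assumes "A $ 0 = 0"
  shows "k < n \<Longrightarrow> (A ^ n) $ k = 0"
proof (induction n arbitrary: k)
  case (Suc n)
  have "(A ^ Suc n) $ k = (\<Sum>j=0..k. A$j * (A^n)$(k - j))" by (simp add: fps_mult_nth)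
  also have "\<dots> = 0"
  proof (rule sum.neutral, intro ballI)
    fix j assume "j \<in> {0..k}"
    then show "A$j * (A^n)$(k - j) = 0" using Suc assms by (cases j) auto
  qed
  finally show ?case .
qed simp

definition LP :: "nat \<Rightarrow> 'a::field_char_0 poly" where
  "LP M = (\<Sum>n<M. monom ((-1)^n / of_nat (n+1)) (n+1))"

definition QP :: "nat \<Rightarrow> nat \<Rightarrow> 'a::field_char_0 poly" where
  "QP K M = (\<Sum>n<K. smult (1 / fact n) (LP M ^ n))"

lemma coeff_LP: "coeff (LP M) k = (if 1 \<le> k \<and> k \<le> M then (-1)^(k-1) / of_nat k else 0)"
proof (cases "1 \<le> k \<and> k \<le> M")
  case True
  then obtain j where j: "k = Suc j" "j < M" by (cases k) auto
  have "coeff (LP M) k = (\<Sum>n<M. if n = j then (-1)^n / of_nat (n+1) else 0)"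
    unfolding LP_def coeff_sum j by (intro sum.cong) auto
  also have "\<dots> = (-1)^j / of_nat (j+1)" using j by simp
  finally show ?thesis using j by simp
next
  case False
  then show ?thesis unfolding LP_def coeff_sum by (intro trans[OF sum.neutral]) auto
qed

lemma LP_ln: "i \<le> M \<Longrightarrow> fps_of_poly (LP M) $ i = (fps_ln (1::'a::field_char_0)) $ i"
  by (simp add: coeff_LP fps_ln_nth)

lemma coeff_QP:
  assumes "k < K" "k \<le> M"
  shows "coeff (QP K M :: 'a::field_char_0 poly) k = coeff [:1, 1:] k"
proof -
  have "coeff (QP K M :: 'a poly) k = (\<Sum>n<K. (1 / fact n) * (fps_ln (1::'a) ^ n) $ k)"
    unfolding QP_def coeff_sum coeff_smult
    using trunc_pow[of k "fps_of_poly (LP M)" "fps_ln 1", OF LP_ln] assms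
    by (intro sum.cong) (auto simp flip: fps_of_poly_power)
  also have "\<dots> = (\<Sum>n\<in>{0..k}. (1 / fact n) * (fps_ln (1::'a) ^ n) $ k)"
  proof (rule sum.mono_neutral_right)
    show "{0..k} \<subseteq> {..<K}" using assms by auto
    show "\<forall>i\<in>{..<K} - {0..k}. 1 / fact i * (fps_ln (1::'a) ^ i) $ k = 0"
      using pow_zero_low[of "fps_ln (1::'a)"] by auto
  qed simp
  also have "\<dots> = (fps_exp (1::'a) oo fps_ln 1) $ k"
    by (simp add: fps_compose_nth)
  also have "\<dots> = coeff [:1, 1:] k" unfolding exp_oo_ln
    by (cases k) (auto simp: coeff_pCons split: nat.splits)
  finally show ?thesis .
qed

context cpl begin

definition W :: "'a poly \<Rightarrow> nat \<Rightarrow> bool" where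
  "W F d \<longleftrightarrow> (\<forall>k. nabs (coeff F k) * th ^ d \<le> th ^ k)"

lemma W_one: "W 1 0" unfolding W_def using th_ge1 by (auto simp: coeff_1)

lemma W_LP: "W (LP M) 1"
  unfolding W_def
proof
  fix k
  show "nabs (coeff (LP M) k) * th ^ 1 \<le> th ^ k"
  proof (cases "1 \<le> k \<and> k \<le> M")
    case True
    have i: "1 \<le> nabs (of_nat k :: 'a) * th ^ (k - 1)" using ninvnat[of k] True by simp
    have kp: "nabs (of_nat k :: 'a) > 0" using True nn[of "of_nat k :: 'a"] nz[of "of_nat k :: 'a"] by (simp add: less_le)
    have "nabs (coeff (LP M) k) = 1 / nabs (of_nat k :: 'a)"
      using True by (simp add: coeff_LP ndiv npow nminus1)
    also have "\<dots> \<le> th ^ (k - 1)" using i kp by (simp add: field_simps)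
    finally have "nabs (coeff (LP M) k) * th \<le> th ^ (k - 1) * th" using th_pos by simp
    also have "\<dots> = th ^ k" using True by (cases k) auto
    finally show ?thesis by simp
  next
    case False
    then have "coeff (LP M :: 'a poly) k = 0" by (simp add: coeff_LP)
    then show ?thesis using th_pos by simp
  qed
qed

lemma W_mult: assumes "W F d" "W G e" shows "W (F * G) (d + e)"
  unfolding W_def
proof
  fix k
  have tp: "th ^ (d + e) > 0" using th_pos by simp
  have "nabs (coeff (F * G) k) \<le> th ^ k / th ^ (d + e)"
    unfolding coeff_mult
  proof (rule nsum_le)
    fix i assume "i \<in> {..k}"
    then have ik: "i \<le> k" by simp
    have a: "nabs (coeff F i) * th ^ d \<le> th ^ i" using assms(1) unfolding W_def by blast
    have b: "nabs (coeff G (k - i)) * th ^ e \<le> th ^ (k - i)" using assms(2) unfolding W_def by blast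
    have "(nabs (coeff F i) * th ^ d) * (nabs (coeff G (k - i)) * th ^ e) \<le> th ^ i * th ^ (k - i)"
      using a b nn th_pos by (intro mult_mono) auto
    also have "\<dots> = th ^ k" using ik by (simp flip: power_add)
    finally have "nabs (coeff F i * coeff G (k - i)) * th ^ (d + e) \<le> th ^ k"
      by (simp add: nmult power_add ac_simps)
    then show "nabs (coeff F i * coeff G (k - i)) \<le> th ^ k / th ^ (d + e)"
      using tp by (simp add: field_simps)
  qed (use th_pos in auto)
  then show "nabs (coeff (F * G) k) * th ^ (d + e) \<le> th ^ k" using tp by (simp add: field_simps)
qed

lemma W_pow: assumes "W F d" shows "W (F ^ n) (n * d)"
proof (induction n)
  case 0 then show ?case using W_one by simp
next
  case (Suc n)
  then show ?case using W_mult[OF assms Suc] by (simp add: add.commute)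
qed

lemma W_smult: assumes "nabs c \<le> th ^ n" "W F n" shows "W (smult c F) 0"
  unfolding W_def
proof
  fix k
  have "nabs (coeff (smult c F) k) = nabs c * nabs (coeff F k)" by (simp add: nmult)
  also have "\<dots> \<le> th ^ n * nabs (coeff F k)" using assms(1) nn by (simp add: mult_right_mono)
  also have "\<dots> \<le> th ^ k" using assms(2) unfolding W_def by (simp add: mult.commute)
  finally show "nabs (coeff (smult c F) k) * th ^ 0 \<le> th ^ k" by simp
qed

lemma W_sum: assumes "finite A" "\<And>i. i \<in> A \<Longrightarrow> W (f i) 0" shows "W (sum f A) 0"
  unfolding W_def
proof
  fix k
  have "nabs (coeff (sum f A) k) \<le> th ^ k" unfolding coeff_sum
    by (rule nsum_le) (use assms th_pos in \<open>auto simp: W_def\<close>)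
  then show "nabs (coeff (sum f A) k) * th ^ 0 \<le> th ^ k" by simp
qed

lemma inv_fact: "nabs (1 / fact n :: 'a) \<le> th ^ n"
proof -
  have f: "1 \<le> nabs (fact n :: 'a) * th ^ n" by (rule nfact)
  have fp: "nabs (fact n :: 'a) > 0" using nn[of "fact n :: 'a"] nz[of "fact n :: 'a"] by (simp add: less_le)
  show ?thesis using f fp by (simp add: ndiv field_simps)
qed

lemma W_QP: "W (QP K M) 0"
  unfolding QP_def
  by (rule W_sum) (auto intro!: W_smult[OF inv_fact] W_pow[OF W_LP, simplified])

end

context cpl begin

definition lt :: "'a \<Rightarrow> nat \<Rightarrow> 'a" where "lt y n = (-1)^n * y^(n+1) / of_nat (n+1)"

lemma log_term: assumes y: "nabs y \<le> 1 / real p" shows "nabs (lt y n) \<le> r ^ n / real p"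
proof -
  have i: "1 \<le> nabs (of_nat (n+1) :: 'a) * th ^ n" using ninvnat[of "n+1"] by simp
  have ne: "(of_nat (n+1) :: 'a) \<noteq> 0" using of_nat_neq_0[of n] by simp
  have kp: "nabs (of_nat (n+1) :: 'a) > 0" using nn[of "of_nat (n+1) :: 'a"] nz[of "of_nat (n+1) :: 'a"] ne by linarith
  have "nabs (lt y n) = nabs (y^(n+1)) / nabs (of_nat (n+1) :: 'a)"
    unfolding lt_def by (simp add: ndiv nmult npow nminus1)
  also have "\<dots> \<le> (1 / real p) ^ (n+1) / nabs (of_nat (n+1) :: 'a)"
    using small_pow[OF y, of "n+1"] kp by (intro divide_right_mono) auto
  also have "\<dots> \<le> (1 / real p) ^ (n+1) * th ^ n"
    using i kp pgt0 by (simp add: field_simps)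
  also have "\<dots> = r ^ n / real p" unfolding r_def by (simp add: power_divide)
  finally show ?thesis .
qed

lemma log_term1: assumes y: "nabs y \<le> 1 / real p" shows "nabs (lt y n) \<le> 1 / real p"
proof -
  have "r ^ n \<le> 1" using r_pos r_lt1 by (simp add: power_le_one)
  then have "r ^ n / real p \<le> 1 / real p" using pgt0 by (simp add: divide_right_mono)
  then show ?thesis using log_term[OF y, of n] by simp
qed

definition LS :: "nat \<Rightarrow> 'a \<Rightarrow> 'a" where "LS M y = (\<Sum>n<M. lt y n)"

lemma LS_bound: assumes y: "nabs y \<le> 1 / real p" shows "nabs (LS M y) \<le> 1 / real p"
  unfolding LS_def by (rule nsum_le) (use log_term1[OF y] pgt0 in auto)

lemma plog_conv: assumes y: "nabs (x - 1) \<le> 1 / real p" shows "conv (\<lambda>M. LS M (x - 1)) (plog nabs x)"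
proof -
  have "\<exists>s. nsums nabs (lt (x - 1)) s"
  proof (rule null_sums)
    fix e :: real assume e: "e > 0"
    then obtain M where M: "\<forall>n\<ge>M. r ^ n < e" using geom by blast
    have "r ^ n / real p \<le> r ^ n" for n using pgt0 p_gt r_pos
      by (simp add: divide_le_eq mult_le_cancel_left1 less_imp_le)
    then show "\<exists>M. \<forall>n\<ge>M. nabs (lt (x - 1) n) < e" using M log_term[OF y]
      by (meson le_less_trans order_trans)
  qed
  then obtain s where s: "nsums nabs (lt (x - 1)) s" by blast
  have "plog nabs x = s" unfolding plog_def using the_sums[OF s] unfolding lt_def .
  then show ?thesis using s unfolding nsums_def conv_def LS_def by simp
qed

lemma plog_bound: assumes y: "nabs (x - 1) \<le> 1 / real p" shows "nabs (plog nabs x) \<le> 1 / real p"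
  using conv_bound[OF plog_conv[OF y] LS_bound[OF y]] pgt0 by simp

lemma pow_diff:
  assumes "nabs a \<le> R" "nabs b \<le> R" "0 \<le> R"
  shows "nabs (a ^ Suc n - b ^ Suc n) \<le> nabs (a - b) * R ^ n"
proof (induction n)
  case (Suc n)
  have "a ^ Suc (Suc n) - b ^ Suc (Suc n) = a * (a ^ Suc n - b ^ Suc n) + (a - b) * b ^ Suc n"
    by (simp add: algebra_simps)
  then have "nabs (a ^ Suc (Suc n) - b ^ Suc (Suc n)) \<le> max (nabs a * nabs (a ^ Suc n - b ^ Suc n)) (nabs (a - b) * nabs (b ^ Suc n))"
    using ultra[of "a * (a ^ Suc n - b ^ Suc n)" "(a - b) * b ^ Suc n"] by (simp add: nmult)
  moreover have "nabs a * nabs (a ^ Suc n - b ^ Suc n) \<le> R * (nabs (a - b) * R ^ n)"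
    using Suc assms nn by (intro mult_mono) auto
  moreover have "nabs (b ^ Suc n) \<le> R ^ Suc n" unfolding npow using assms nn by (intro power_mono) auto
  then have "nabs (a - b) * nabs (b ^ Suc n) \<le> nabs (a - b) * R ^ Suc n" using nn by (intro mult_left_mono) auto
  ultimately show ?case by (simp add: ac_simps)
qed simp

lemma E_diff:
  assumes a: "nabs a \<le> 1 / real p" and b: "nabs b \<le> 1 / real p"
  shows "nabs (E K a - E K b) \<le> real p * nabs (a - b)"
proof -
  have "E K a - E K b = (\<Sum>n<K. (a ^ n - b ^ n) / fact n)"
    unfolding E_def by (simp add: sum_subtractf diff_divide_distrib)
  also have "nabs \<dots> \<le> real p * nabs (a - b)"
  proof (rule nsum_le)
    fix n assume "n \<in> {..<K}"
    show "nabs ((a ^ n - b ^ n) / fact n) \<le> real p * nabs (a - b)"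
    proof (cases n)
      case 0 then show ?thesis using pgt0 nn by simp
    next
      case (Suc m)
      have "nabs ((a ^ n - b ^ n) / fact n) = nabs (a ^ n - b ^ n) * nabs (1 / fact n :: 'a)"
        by (simp add: ndiv)
      also have "\<dots> \<le> (nabs (a - b) * (1 / real p) ^ m) * th ^ n"
        unfolding Suc using pow_diff[OF a b, of m] inv_fact[of "Suc m"] nn pgt0
        by (intro mult_mono) auto
      also have "\<dots> = real p * nabs (a - b) * r ^ n"
        unfolding Suc r_def using pgt0 by (simp add: power_divide field_simps)
      also have "\<dots> \<le> real p * nabs (a - b) * 1"
        using r_pos r_lt1 pgt0 nn by (intro mult_left_mono) (auto simp: power_le_one)
      finally show ?thesis by simp
    qed
  qed (use pgt0 nn in auto)
  finally show ?thesis .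
qed

lemma poly_LP: "poly (LP M) y = LS M y"
  unfolding LP_def LS_def lt_def poly_sum by (simp add: poly_monom)

lemma poly_QP: "poly (QP K M) y = E K (LS M y)"
  unfolding QP_def E_def poly_sum by (simp add: poly_LP)

lemma R_bound:
  assumes y: "nabs y \<le> 1 / real p" and T: "2 \<le> T" "T \<le> K" "T \<le> M + 1"
  shows "nabs (poly (QP K M) y - (1 + y)) \<le> r ^ T"
proof -
  define R where "R = (QP K M - [:1, 1:] :: 'a poly)"
  have "poly R y = poly (QP K M) y - (1 + y)" unfolding R_def by simp
  moreover have "nabs (poly R y) \<le> r ^ T"
    unfolding poly_altdef
  proof (rule nsum_le)
    fix k assume "k \<in> {..degree R}"
    show "nabs (coeff R k * y ^ k) \<le> r ^ T"
    proof (cases "k < T")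
      case True
      then have "coeff R k = 0" unfolding R_def using coeff_QP[of k K M] T by simp
      then show ?thesis using r_pos by simp
    next
      case False
      then have "coeff R k = coeff (QP K M) k" unfolding R_def using T by (simp add: coeff_pCons split: nat.splits)
      then have "nabs (coeff R k) \<le> th ^ k" using W_QP[of K M] unfolding W_def by simp
      then have "nabs (coeff R k * y ^ k) \<le> th ^ k * (1 / real p) ^ k"
        unfolding nmult using small_pow[OF y, of k] nn th_pos by (intro mult_mono) auto
      also have "\<dots> = r ^ k" unfolding r_def by (simp add: power_divide)
      also have "\<dots> \<le> r ^ T" using False r_pos r_lt1 by (intro power_decreasing) auto
      finally show ?thesis .
    qed
  qed (use r_pos in auto)
  ultimately show ?thesis by simp
qed

theorem pexp_plog:
  assumes y: "nabs (x - 1) \<le> 1 / real p"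
  shows "pexp nabs (plog nabs x) = x"
proof (rule small_eq)
  fix e :: real assume e: "e > 0"
  define L where "L = plog nabs x"
  have Lb: "nabs L \<le> 1 / real p" unfolding L_def by (rule plog_bound[OF y])
  have ep: "e / real p > 0" using e pgt0 by simp
  obtain M0 where M0: "\<forall>n\<ge>M0. nabs (LS n (x - 1) - L) < e / real p"
    using plog_conv[OF y] ep unfolding conv_def L_def by blast
  obtain M1 where M1: "\<forall>n\<ge>M1. r ^ n < e" using geom e by blast
  define M where "M = max M0 M1 + 1"
  obtain K0 where K0: "\<forall>n\<ge>K0. nabs (E n L - pexp nabs L) < e"
    using pexp_conv[OF Lb] e unfolding conv_def by blast
  define K where "K = max K0 (M + 1)"
  have a: "nabs (pexp nabs L - E K L) < e" using K0 K_def ndiff_comm by (metis max.cobounded1)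
  have LSb: "nabs (LS M (x - 1)) \<le> 1 / real p" by (rule LS_bound[OF y])
  have "nabs (E K L - E K (LS M (x - 1))) \<le> real p * nabs (L - LS M (x - 1))"
    by (rule E_diff[OF Lb LSb])
  also have "\<dots> < real p * (e / real p)"
    using M0 M_def ndiff_comm[of L] pgt0 by (intro mult_strict_left_mono) auto
  also have "\<dots> = e" using pgt0 by simp
  finally have b: "nabs (E K L - E K (LS M (x - 1))) < e" .
  have "nabs (poly (QP K M) (x - 1) - (1 + (x - 1))) \<le> r ^ (M + 1)"
    by (rule R_bound[OF y]) (auto simp: K_def M_def)
  also have "r ^ (M + 1) < e" using M1 unfolding M_def by (metis le_add1 max.cobounded2 order_trans)
  finally have c: "nabs (E K (LS M (x - 1)) - x) < e" by (simp add: poly_QP)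
  have "nabs (pexp nabs L - x) \<le> max (nabs (pexp nabs L - E K L)) (nabs (E K L - x))" by (rule ultra_diff)
  moreover have "nabs (E K L - x) \<le> max (nabs (E K L - E K (LS M (x - 1)))) (nabs (E K (LS M (x - 1)) - x))"
    by (rule ultra_diff)
  ultimately show "nabs (pexp nabs (plog nabs x) - x) < e" using a b c unfolding L_def by simp
qed

end

fun tseq :: "nat \<Rightarrow> int \<times> int \<times> int" where
  "tseq 0 = (1, 0, 0)"
| "tseq (Suc n) = (case tseq n of (a, b, c) \<Rightarrow> (c, a + c, b + c))"

lemma tseq_pow:
  assumes "tribP (x::'a::field_char_0) = 0"
  shows "x ^ n = of_int (fst (tseq n)) + of_int (fst (snd (tseq n))) * x + of_int (snd (snd (tseq n))) * x^2"
proof (induction n)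
  case (Suc n)
  obtain a b c where abc: "tseq n = (a, b, c)" by (cases "tseq n") auto
  have x3: "x^3 = x^2 + x + 1" using assms unfolding tribP_def by (simp add: algebra_simps)
  have "x ^ Suc n = x * (of_int a + of_int b * x + of_int c * x^2)" using Suc abc by simp
  also have "\<dots> = of_int a * x + of_int b * x^2 + of_int c * x^3"
    by (simp add: algebra_simps power2_eq_square power3_eq_cube)
  also have "\<dots> = of_int c + of_int (a + c) * x + of_int (b + c) * x^2"
    unfolding x3 by (simp add: algebra_simps)
  finally show ?case using abc by simp
qed simp

context cpl begin

lemma lam_abs: assumes "tribP x = 0" shows "nabs x = 1"
proof -
  have x3: "x^3 = x^2 + x + 1" using assms unfolding tribP_def by (simp add: algebra_simps)
  have le: "nabs x \<le> 1"
  proof (rule ccontr)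
    assume "\<not> nabs x \<le> 1"
    then have g: "nabs x > 1" by simp
    have "nabs (x^2 + x + 1) \<le> max (max (nabs (x^2)) (nabs x)) (nabs 1)"
      using ultra[of "x^2 + x" 1] ultra[of "x^2" x] by (meson max.mono order_refl order_trans)
    also have "\<dots> \<le> nabs x ^ 2"
    proof -
      have "nabs x * 1 \<le> nabs x * nabs x" using g by (intro mult_left_mono) auto
      then have h1: "nabs x \<le> nabs x ^ 2" by (simp add: power2_eq_square)
      have h2: "1 \<le> nabs x ^ 2" using g by (simp add: one_le_power)
      show ?thesis unfolding npow using h1 h2 by simp
    qed
    finally have "nabs x ^ 3 \<le> nabs x ^ 2" using x3 by (metis npow)
    moreover have "nabs x ^ 2 < nabs x ^ 3" using g by (intro power_strict_increasing) auto
    ultimately show False by simp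
  qed
  have "x * (x^2 - x - 1) = 1" using assms unfolding tribP_def by (simp add: algebra_simps power2_eq_square power3_eq_cube)
  then have e: "nabs x * nabs (x^2 - x - 1) = 1" by (metis n1 nmult)
  have "nabs (x^2 - x - 1) \<le> max (max (nabs (x^2)) (nabs x)) (nabs 1)"
    using ndiff[of "x^2 - x" 1] ndiff[of "x^2" x] by (meson max.mono order_refl order_trans)
  also have "\<dots> \<le> 1" unfolding npow using le nn[of x] by (auto simp: power_le_one)
  finally have "nabs (x^2 - x - 1) \<le> 1" .
  then have "nabs x \<ge> 1" using e nn[of x] by (metis mult_left_le order_refl mult.commute not_le mult_le_one nn)
  then show ?thesis using le by simp
qed

lemma nint_p: "int p dvd d \<Longrightarrow> nabs (of_int d :: 'a) \<le> 1 / real p"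
proof -
  assume "int p dvd d"
  then obtain a where a: "d = int p * a" by (auto elim: dvdE)
  have "nabs (of_int d :: 'a) = nabs (of_nat p :: 'a) * nabs (of_int a :: 'a)" unfolding a by (simp add: nmult)
  also have "\<dots> \<le> 1 / real p * 1" unfolding np using nint_le1[of a] pgt0 by (intro mult_left_mono) auto
  finally show ?thesis by simp
qed

lemma N_exists: "\<exists>n. 0 < n \<and> (\<forall>x\<in>(Lam::'a set). nabs (x ^ n - 1) \<le> 1 / real p)"
proof -
  define g where "g n = (fst (tseq n) mod int p, fst (snd (tseq n)) mod int p, snd (snd (tseq n)) mod int p)" for n
  have "range g \<subseteq> {0..<int p} \<times> {0..<int p} \<times> {0..<int p}" unfolding g_def using pgt0 by auto
  then have "finite (range g)" by (rule finite_subset) auto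
  then have "\<not> inj g" using finite_imageD infinite_UNIV_nat by blast
  then obtain i j where ij: "g i = g j" "i \<noteq> j" unfolding inj_def by blast
  then obtain i j where ij: "g i = g j" "i < j" by (metis nat_neq_iff)
  obtain a1 b1 c1 where t1: "tseq i = (a1, b1, c1)" by (cases "tseq i") auto
  obtain a2 b2 c2 where t2: "tseq j = (a2, b2, c2)" by (cases "tseq j") auto
  have d: "int p dvd (a2 - a1)" "int p dvd (b2 - b1)" "int p dvd (c2 - c1)"
    using ij(1) t1 t2 unfolding g_def by (auto simp: mod_eq_dvd_iff dvd_diff_commute)
  show ?thesis
  proof (intro exI conjI ballI)
    show "0 < j - i" using ij by simp
    fix x :: 'a assume "x \<in> Lam"
    then have tx: "tribP x = 0" unfolding Lam_def by simp
    have "x ^ j - x ^ i = of_int (a2 - a1) + of_int (b2 - b1) * x + of_int (c2 - c1) * x^2"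
      using tseq_pow[OF tx, of i] tseq_pow[OF tx, of j] t1 t2 by (simp add: algebra_simps)
    also have "nabs \<dots> \<le> 1 / real p"
    proof -
      have xa: "nabs x = 1" by (rule lam_abs[OF tx])
      have "nabs (of_int (a2 - a1) :: 'a) \<le> 1 / real p" by (rule nint_p[OF d(1)])
      moreover have "nabs (of_int (b2 - b1) * x) \<le> 1 / real p" using nint_p[OF d(2)] xa by (simp add: nmult)
      moreover have "nabs (of_int (c2 - c1) * x^2) \<le> 1 / real p" using nint_p[OF d(3)] xa by (simp add: nmult npow)
      ultimately show ?thesis
        using ultra[of "of_int (a2 - a1) + of_int (b2 - b1) * x" "of_int (c2 - c1) * x^2"]
          ultra[of "of_int (a2 - a1)" "of_int (b2 - b1) * x"] by simp
    qed
    finally have A: "nabs (x ^ j - x ^ i) \<le> 1 / real p" .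
    have "x ^ j - x ^ i = x ^ i * (x ^ (j - i) - 1)" using ij by (simp add: algebra_simps flip: power_add)
    then have "nabs (x ^ j - x ^ i) = nabs (x ^ (j - i) - 1)" using lam_abs[OF tx] by (simp add: nmult npow)
    then show "nabs (x ^ (j - i) - 1) \<le> 1 / real p" using A by simp
  qed
qed

lemma N_prop: "0 < tribN p nabs \<and> (\<forall>x\<in>(Lam::'a set). nabs (x ^ tribN p nabs - 1) \<le> 1 / real p)"
  unfolding tribN_def by (rule LeastI_ex[OF N_exists])

end

theorem lemma17:
  fixes p :: nat and nabs :: "'a::field_char_0 \<Rightarrow> real" and l :: nat and b :: rat
  assumes "prime p" and "p \<notin> {2, 3, 11}"
    and "Cp_like p nabs"
    and "l < tribN p nabs"
    and "\<not> int p dvd snd (quotient_of b)"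
    and "f_ell p nabs l (of_rat b) = 0"
  shows "twisted_rational_zero TYPE('a) (of_nat l + of_nat (tribN p nabs) * b)"
proof -
  interpret cpl p nabs using assms(1-3) by unfold_locales auto
  define N where "N = tribN p nabs"
  obtain s' m' where q': "quotient_of b = (s', m')" by fastforce
  have m'pos: "m' > 0" using quotient_of_denom_pos[OF q'] .
  have bq: "b = of_int s' / of_int m'" using quotient_of_div[OF q'] .
  have m'p: "\<not> int p dvd m'" using assms(5) q' by simp
  have bnd: "nabs (of_rat b :: 'a) \<le> 1"
  proof -
    have "(of_rat b :: 'a) = of_int s' / of_int m'" unfolding bq by (simp add: of_rat_divide)
    then have "nabs (of_rat b :: 'a) = nabs (of_int s' :: 'a) / nabs (of_int m' :: 'a)" by (simp add: ndiv)
    also have "\<dots> = nabs (of_int s' :: 'a)" using nint_unit[OF m'p] by simp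
    finally show ?thesis using nint_le1 by simp
  qed
  have bm: "of_int m' * (of_rat b :: 'a) = of_int s'"
    unfolding bq using m'pos by (simp add: of_rat_divide)
  obtain s m where q: "quotient_of (of_nat l + of_nat N * b) = (s, m)" by fastforce
  have mpos: "m > 0" using quotient_of_denom_pos[OF q] .
  have rq: "of_nat l + of_nat N * b = of_int s / of_int m" using quotient_of_div[OF q] .
  define A where "A = int l * m' + int N * s'"
  have key: "A * m = s * m'"
  proof -
    have "of_int s / of_int m = (of_int A / of_int m' :: rat)"
      unfolding rq[symmetric] A_def bq using m'pos by (simp add: field_simps)
    then show ?thesis using mpos m'pos by (simp add: frac_eq_eq flip: of_int_mult) 
  qed
  define mu0 where "mu0 x = x ^ l * pexp nabs (of_rat b * plog nabs (x ^ N))" for x :: 'a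
  define mu where "mu x = (SOME y. y ^ nat m = x powi s)" for x :: 'a
  define xi where "xi x = mu0 x / mu x" for x :: 'a
  have good: "mu x ^ nat m = x powi s \<and> root_of_unity (xi x) \<and> xi x * cc x * mu x = cc x * mu0 x"
    if xL: "x \<in> Lam" for x
  proof -
    have tx: "tribP x = 0" using xL unfolding Lam_def by simp
    have x0: "x \<noteq> 0" using tx unfolding tribP_def by auto
    have y: "nabs (x ^ N - 1) \<le> 1 / real p" using N_prop xL unfolding N_def by blast
    define L where "L = plog nabs (x ^ N)"
    have Lb: "nabs L \<le> 1 / real p" unfolding L_def by (rule plog_bound[OF y])
    have ub: "nabs (of_rat b * L) \<le> 1 / real p"
    proof -
      have "nabs (of_rat b * L) \<le> 1 * nabs L" unfolding nmult using bnd nn by (intro mult_right_mono) auto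
      then show ?thesis using Lb by simp
    qed
    have eL: "pexp nabs L = x ^ N" unfolding L_def by (rule pexp_plog[OF y])
    have "pexp nabs (of_rat b * L) ^ nat m' = pexp nabs (of_nat (nat m') * (of_rat b * L))"
      by (rule pexp_nat[OF ub, symmetric])
    also have "of_nat (nat m') * (of_rat b * L) = of_int s' * L"
      using m'pos bm by (simp add: mult.assoc[symmetric])
    also have "pexp nabs (of_int s' * L) = (x ^ N) powi s'" using pexp_int[OF Lb] eL by simp
    finally have E: "pexp nabs (of_rat b * L) ^ nat m' = (x ^ N) powi s'" .
    have mu0p: "mu0 x ^ nat m' = x powi A"
    proof -
      have "mu0 x ^ nat m' = x ^ (l * nat m') * (x ^ N) powi s'"
        unfolding mu0_def L_def[symmetric] power_mult_distrib E by (simp add: power_mult)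
      also have "x ^ (l * nat m') = x powi (int l * m')" using m'pos
        by (metis int_nat_eq less_le_not_le of_nat_mult power_int_of_nat)
      also have "(x ^ N) powi s' = x powi (int N * s')" by (simp add: power_int_mult)
      finally show ?thesis unfolding A_def using x0 by (simp add: power_int_add)
    qed
    have ex: "\<exists>y. y ^ nat m = x powi s" by (rule alg_closed_root[OF algc]) (use mpos in simp)
    have mup: "mu x ^ nat m = x powi s" unfolding mu_def using someI_ex[OF ex] .
    have mu0: "mu x \<noteq> 0" using mup x0 mpos by (metis power_int_eq_0_iff zero_power nat_0_less_mult_iff zero_less_nat_eq mult_1_left zero_less_one)
    have ru: "root_of_unity (xi x)"
      unfolding root_of_unity_def
    proof (intro exI conjI)
      show "0 < nat m * nat m'" using mpos m'pos by simp
      have "xi x ^ (nat m * nat m') = (mu0 x ^ nat m') ^ nat m / (mu x ^ nat m) ^ nat m'"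
        unfolding xi_def by (simp add: power_divide flip: power_mult) (simp add: mult.commute)
      also have "\<dots> = x powi (A * m) / x powi (s * m')"
        unfolding mu0p mup using mpos m'pos
        by (simp add: power_int_mult flip: power_int_of_nat)
      also have "\<dots> = 1" unfolding key using x0 by simp
      finally show "xi x ^ (nat m * nat m') = 1" .
    qed
    have "xi x * cc x * mu x = cc x * mu0 x" unfolding xi_def using mu0 by simp
    then show ?thesis using mup ru by blast
  qed
  obtain l1 l2 l3 where L: "(Lam::'a set) = {l1, l2, l3}" "l1 \<noteq> l2" "l1 \<noteq> l3" "l2 \<noteq> l3"
    using three_roots[OF algc] by blast
  have sum0: "cc l1 * mu0 l1 + cc l2 * mu0 l2 + cc l3 * mu0 l3 = 0"
  proof -
    have "f_ell p nabs l (of_rat b) = (\<Sum>x\<in>{l1,l2,l3}. cc x * mu0 x)"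
      unfolding f_ell_def L(1) mu0_def N_def by (simp add: ac_simps)
    also have "\<dots> = cc l1 * mu0 l1 + cc l2 * mu0 l2 + cc l3 * mu0 l3" using L(2-4) by (simp add: ac_simps)
    finally show ?thesis using assms(6) by simp
  qed
  have g1: "mu l1 ^ nat m = l1 powi s \<and> root_of_unity (xi l1) \<and> xi l1 * cc l1 * mu l1 = cc l1 * mu0 l1"
    by (rule good) (simp add: L)
  have g2: "mu l2 ^ nat m = l2 powi s \<and> root_of_unity (xi l2) \<and> xi l2 * cc l2 * mu l2 = cc l2 * mu0 l2"
    by (rule good) (simp add: L)
  have g3: "mu l3 ^ nat m = l3 powi s \<and> root_of_unity (xi l3) \<and> xi l3 * cc l3 * mu l3 = cc l3 * mu0 l3"
    by (rule good) (simp add: L)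
  show ?thesis
    unfolding twisted_rational_zero_def N_def[symmetric] q prod.case
    using L g1 g2 g3 sum0 by metis
qed

end
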